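(* Let $m\ge1$ and let $\phi$ be the automorphism of the free group $F_{2m}$ with basis $A_1,\dots,A_m,B_1,\dots,B_m$ defined by $\phi(A_i)=(A_1\cdots A_{i-1})A_i(A_1\cdots A_{i-1})^{-1}$ for $1\le i\le m$ and $\phi(B_j)=A_1A_2\cdots A_m(B_1B_2\cdots B_j)\overline{A}_{j-1}\overline{A}_{j-2}\cdots\overline{A}_1$ for $1\le j\le m$ (so $\phi(A_1)=A_1$ and $\phi(B_1)=A_1\cdots A_mB_1$). Then for all integers $n\ge1$ and $1\le k\le m$, $\phi^n(B_k)=A_1^n\cdots A_m^n\,u_{k,n}\,B_k\,\overline{A}_{k-1}^{\,n}\cdots\overline{A}_1^{\,n}$ in $F_{2m}$, where $u_{k,n}$ is a positive word.
   Context: A bar denotes the inverse of an element: $\overline{A}_i=A_i^{-1}$. A positive word is a word in the letters $A_1,\dots,A_m,B_1,\dots,B_m$ containing no inverse letters (the empty word is allowed). *)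

theory Defs
  imports Main
begin

text \<open>Generators of the free group F_{2m}: A i and B i (with 1 \<le> i \<le> m).
  A letter is a generator together with a flag; flag True means the inverse letter.
  Elements of the free group are represented by words (lists of letters);
  two words represent the same element iff they are equivalent under the
  equivalence closure of cancelling an adjacent pair x x^{-1}.\<close>

datatype gen = A nat | B nat

type_synonym letter = "gen \<times> bool"

inductive cancel1 :: "letter list \<Rightarrow> letter list \<Rightarrow> bool" where
  "cancel1 (xs @ [(g, b), (g, \<not> b)] @ ys) (xs @ ys)"

definition fg_eq :: "letter list \<Rightarrow> letter list \<Rightarrow> bool" where
  "fg_eq u v = equivclp cancel1 u v"

definition inv_word :: "letter list \<Rightarrow> letter list" where
  "inv_word w = rev (map (\<lambda>(g, b). (g, \<not> b)) w)"

definition Apre :: "nat \<Rightarrow> letter list" where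
  "Apre i = map (\<lambda>l. (A l, False)) [1..<i]"

definition Bpre :: "nat \<Rightarrow> letter list" where
  "Bpre j = map (\<lambda>l. (B l, False)) [1..<Suc j]"

fun phi_gen :: "nat \<Rightarrow> gen \<Rightarrow> letter list" where
  "phi_gen m (A i) = Apre i @ [(A i, False)] @ inv_word (Apre i)"
| "phi_gen m (B j) = Apre (Suc m) @ Bpre j @ inv_word (Apre j)"

definition phi_letter :: "nat \<Rightarrow> letter \<Rightarrow> letter list" where
  "phi_letter m x = (if snd x then inv_word (phi_gen m (fst x)) else phi_gen m (fst x))"

definition phi_word :: "nat \<Rightarrow> letter list \<Rightarrow> letter list" where
  "phi_word m w = concat (map (phi_letter m) w)"

definition positive_word :: "nat \<Rightarrow> letter list \<Rightarrow> bool" where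
  "positive_word m u \<longleftrightarrow>
     (\<forall>x \<in> set u. \<not> snd x \<and> (\<exists>i \<in> {1..m}. fst x = A i \<or> fst x = B i))"

end

theory Submission
  imports Defs
begin

lemma equivclp_map:
  assumes h: "\<And>x y. r x y \<Longrightarrow> equivclp r (f x) (f y)" and "equivclp r u v"
  shows "equivclp r (f u) (f v)"
  using assms(2)
proof (induct rule: equivclp_induct)
  case base show ?case by simp
next
  case (step y z) thus ?case using h by (metis equivclp_sym equivclp_trans)
qed

lemma fg_refl[simp]: "fg_eq u u" by (simp add: fg_eq_def)
lemma fg_sym: "fg_eq u v \<Longrightarrow> fg_eq v u" unfolding fg_eq_def by (rule equivclp_sym)
lemma fg_trans[trans]: "fg_eq u v \<Longrightarrow> fg_eq v w \<Longrightarrow> fg_eq u w"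
  unfolding fg_eq_def by (rule equivclp_trans)
lemma fg_eq_trans[trans]: "u = v \<Longrightarrow> fg_eq v w \<Longrightarrow> fg_eq u w" by simp
lemma fg_trans_eq[trans]: "fg_eq u v \<Longrightarrow> v = w \<Longrightarrow> fg_eq u w" by simp

lemma cancel1_cong: "cancel1 u v \<Longrightarrow> cancel1 (x @ u @ y) (x @ v @ y)"
proof (induct rule: cancel1.induct)
  case (1 xs g b ys)
  have "cancel1 ((x @ xs) @ [(g, b), (g, \<not> b)] @ (ys @ y)) ((x @ xs) @ (ys @ y))"
    by (rule cancel1.intros)
  thus ?case by simp
qed

lemma fg_cong: "fg_eq u v \<Longrightarrow> fg_eq (x @ u @ y) (x @ v @ y)"
  unfolding fg_eq_def
  by (rule equivclp_map[where f="\<lambda>w. x @ w @ y"]) (auto intro: cancel1_cong)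

lemma fg_append: "fg_eq u u' \<Longrightarrow> fg_eq v v' \<Longrightarrow> fg_eq (u @ v) (u' @ v')"
  using fg_cong[of u u' "[]" v] fg_cong[of v v' u' "[]"] by (auto intro: fg_trans)

lemma fg_cancel_pair: "fg_eq (x @ [(g, b), (g, \<not> b)] @ y) (x @ y)"
  using cancel1.intros[of x g b y] unfolding fg_eq_def by (rule r_into_equivclp)

lemma inv_word_Nil[simp]: "inv_word [] = []" by (simp add: inv_word_def)
lemma inv_word_append[simp]: "inv_word (u @ v) = inv_word v @ inv_word u"
  by (simp add: inv_word_def)
lemma inv_word_Cons: "inv_word ((g, b) # w) = inv_word w @ [(g, \<not> b)]"
  by (simp add: inv_word_def)
lemma inv_word_inv[simp]: "inv_word (inv_word w) = w"
  by (induct w) (auto simp: inv_word_def)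

lemma fg_cancel_right: "fg_eq (x @ w @ inv_word w @ y) (x @ y)"
proof (induct w arbitrary: x y)
  case Nil thus ?case by simp
next
  case (Cons c w)
  obtain g b where c: "c = (g, b)" by (cases c)
  have "x @ (c # w) @ inv_word (c # w) @ y = (x @ [c]) @ w @ inv_word w @ ([(g, \<not> b)] @ y)"
    by (simp add: c inv_word_Cons)
  also have "fg_eq \<dots> ((x @ [c]) @ ([(g, \<not> b)] @ y))" by (rule Cons)
  also have "\<dots> = x @ [(g, b), (g, \<not> b)] @ y" by (simp add: c)
  also have "fg_eq \<dots> (x @ y)" by (rule fg_cancel_pair)
  finally show ?case .
qed

lemma fg_cancel_left: "fg_eq (x @ inv_word w @ w @ y) (x @ y)"
  using fg_cancel_right[of x "inv_word w" y] by simp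

lemma cancel1_inv: "cancel1 u v \<Longrightarrow> cancel1 (inv_word u) (inv_word v)"
proof (induct rule: cancel1.induct)
  case (1 xs g b ys)
  have "cancel1 (inv_word ys @ [(g, b), (g, \<not> b)] @ inv_word xs) (inv_word ys @ inv_word xs)"
    by (rule cancel1.intros)
  thus ?case by (simp add: inv_word_def)
qed

lemma fg_inv: "fg_eq u v \<Longrightarrow> fg_eq (inv_word u) (inv_word v)"
  unfolding fg_eq_def
  by (rule equivclp_map[where f="inv_word"]) (auto intro: cancel1_inv)

lemma fg_move: "fg_eq (x @ y) z \<Longrightarrow> fg_eq y (inv_word x @ z)"
proof -
  assume h: "fg_eq (x @ y) z"
  have "fg_eq y (inv_word x @ x @ y @ [])" using fg_sym[OF fg_cancel_left[of "[]" x y]] by simp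
  also have "fg_eq \<dots> (inv_word x @ z @ [])" using fg_cong[OF h, of "inv_word x" "[]"] by simp
  finally show ?thesis by simp
qed

lemma phi_Nil[simp]: "phi_word m [] = []" by (simp add: phi_word_def)
lemma phi_append[simp]: "phi_word m (u @ v) = phi_word m u @ phi_word m v"
  by (simp add: phi_word_def)
lemma phi_Cons: "phi_word m (x # v) = phi_letter m x @ phi_word m v"
  by (simp add: phi_word_def)
lemma phi_single_pos[simp]: "phi_word m [(g, False)] = phi_gen m g"
  by (simp add: phi_word_def phi_letter_def)

lemma phi_letter_neg: "phi_letter m (g, \<not> b) = inv_word (phi_letter m (g, b))"
  by (simp add: phi_letter_def)

lemma phi_inv: "phi_word m (inv_word w) = inv_word (phi_word m w)"
proof (induct w)
  case Nil thus ?case by simp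
next
  case (Cons c w)
  obtain g b where c: "c = (g, b)" by (cases c)
  show ?case using Cons by (simp add: c inv_word_Cons phi_Cons phi_word_def phi_letter_neg)
qed

lemma cancel1_phi: "cancel1 u v \<Longrightarrow> fg_eq (phi_word m u) (phi_word m v)"
proof (induct rule: cancel1.induct)
  case (1 xs g b ys)
  have "phi_word m (xs @ [(g, b), (g, \<not> b)] @ ys)
     = phi_word m xs @ phi_letter m (g, b) @ inv_word (phi_letter m (g, b)) @ phi_word m ys"
    by (simp add: phi_word_def phi_letter_neg)
  also have "fg_eq \<dots> (phi_word m xs @ phi_word m ys)" by (rule fg_cancel_right)
  finally show ?case by simp
qed

lemma fg_phi: "fg_eq u v \<Longrightarrow> fg_eq (phi_word m u) (phi_word m v)"
  unfolding fg_eq_def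
  by (rule equivclp_map[where f="phi_word m"]) (auto intro: cancel1_phi[unfolded fg_eq_def])

lemma phi_replicate: "phi_word m (replicate a x) = concat (replicate a (phi_word m [x]))"
  by (induct a) (auto simp: phi_word_def)

lemma fg_conj_pow: "fg_eq (concat (replicate a (p @ x @ inv_word p))) (p @ concat (replicate a x) @ inv_word p)"
proof (induct a)
  case 0 show ?case using fg_sym[OF fg_cancel_right[of "[]" p "[]"]] by simp
next
  case (Suc a)
  have "concat (replicate (Suc a) (p @ x @ inv_word p)) = (p @ x @ inv_word p) @ concat (replicate a (p @ x @ inv_word p)) @ []"
    by simp
  also have "fg_eq \<dots> ((p @ x @ inv_word p) @ (p @ concat (replicate a x) @ inv_word p) @ [])"
    by (rule fg_cong[OF Suc])
  also have "\<dots> = (p @ x) @ inv_word p @ p @ (concat (replicate a x) @ inv_word p)" by simp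
  also have "fg_eq \<dots> ((p @ x) @ (concat (replicate a x) @ inv_word p))" by (rule fg_cancel_left)
  finally show ?case by simp
qed

definition R :: "nat \<Rightarrow> nat \<Rightarrow> nat \<Rightarrow> letter list" where
  "R i j a = concat (map (\<lambda>l. replicate a (A l, False)) [i..<j])"

lemma R_split: "i \<le> j \<Longrightarrow> j \<le> k \<Longrightarrow> R i k a = R i j a @ R j k a"
  unfolding R_def using upt_add_eq_append[of i j "k - j"] by simp

lemma R_Suc: "i \<le> j \<Longrightarrow> R i (Suc j) a = R i j a @ replicate a (A j, False)"
  unfolding R_def by simp

lemma R_0[simp]: "R i j 0 = []" by (simp add: R_def)

lemma Apre_R: "Apre j = R 1 j 1"
  by (induct j) (auto simp: Apre_def R_def)

lemma R_Apre: "R (Suc 0) j (Suc 0) = Apre j" using Apre_R by simp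

lemma Apre_Suc: "1 \<le> j \<Longrightarrow> Apre (Suc j) = Apre j @ [(A j, False)]"
  by (simp add: Apre_def)

lemma Apre_01: "j \<le> 1 \<Longrightarrow> Apre j = []"
  by (auto simp: Apre_def le_Suc_eq)

lemma R1_01: "j \<le> 1 \<Longrightarrow> R 1 j a = []"
  by (auto simp: R_def le_Suc_eq)

lemma rep_snoc: "replicate (Suc a) x = replicate a x @ [x]"
  by (simp add: replicate_append_same)

lemma phi_R1: "fg_eq (phi_word m (R 1 j a)) (R 1 j (Suc a) @ inv_word (Apre j))"
proof (induct j)
  case 0 show ?case by (simp add: R_def Apre_def)
next
  case (Suc j)
  show ?case
  proof (cases "j = 0")
    case True thus ?thesis by (simp add: R_def Apre_def)
  next
    case False
    hence j: "1 \<le> j" by simp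
    have "phi_word m (R 1 (Suc j) a) = phi_word m (R 1 j a) @ phi_word m (replicate a (A j, False))"
      using j by (simp add: R_Suc)
    also have "fg_eq \<dots> ((R 1 j (Suc a) @ inv_word (Apre j)) @ (Apre j @ replicate a (A j, False) @ inv_word (Apre j)))"
      apply (rule fg_append[OF Suc])
      using fg_conj_pow[of a "Apre j" "[(A j, False)]"]
      by (simp add: phi_replicate)
    also have "\<dots> = R 1 j (Suc a) @ inv_word (Apre j) @ Apre j @ (replicate a (A j, False) @ inv_word (Apre j))"
      by simp
    also have "fg_eq \<dots> (R 1 j (Suc a) @ (replicate a (A j, False) @ inv_word (Apre j)))"
      by (rule fg_cancel_left)
    also have "\<dots> = (R 1 j (Suc a) @ replicate a (A j, False)) @ inv_word (Apre j)" by simp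
    also have "fg_eq \<dots> ((R 1 j (Suc a) @ replicate a (A j, False)) @ [(A j, False), (A j, \<not> False)] @ inv_word (Apre j))"
      by (rule fg_sym[OF fg_cancel_pair])
    also have "\<dots> = R 1 (Suc j) (Suc a) @ inv_word (Apre (Suc j))"
      using j by (simp add: R_Suc Apre_Suc inv_word_def rep_snoc del: replicate_Suc)
    finally show ?thesis .
  qed
qed

lemma phi_R: assumes "1 \<le> j" "j \<le> M"
  shows "fg_eq (phi_word m (R j M a)) (Apre j @ R j M (Suc a) @ inv_word (Apre M))"
proof -
  have sp: "R 1 M b = R 1 j b @ R j M b" for b by (rule R_split[OF assms])
  have "fg_eq (phi_word m (R j M a)) (inv_word (phi_word m (R 1 j a)) @ phi_word m (R 1 M a))"
    by (rule fg_move) (simp only: sp phi_append fg_refl)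
  also have "fg_eq \<dots> (inv_word (R 1 j (Suc a) @ inv_word (Apre j)) @ (R 1 M (Suc a) @ inv_word (Apre M)))"
    by (rule fg_append[OF fg_inv[OF phi_R1] phi_R1])
  also have "\<dots> = Apre j @ inv_word (R 1 j (Suc a)) @ R 1 j (Suc a) @ (R j M (Suc a) @ inv_word (Apre M))"
    by (simp add: sp[simplified])
  also have "fg_eq \<dots> (Apre j @ (R j M (Suc a) @ inv_word (Apre M)))" by (rule fg_cancel_left)
  finally show ?thesis by simp
qed

fun blk :: "nat \<Rightarrow> nat \<times> nat \<Rightarrow> letter list" where
  "blk m (j, a) = (B j, False) # R j (Suc m) a"

definition W :: "nat \<Rightarrow> (nat \<times> nat) list \<Rightarrow> letter list" where
  "W m bs = concat (map (blk m) bs)"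

fun stp :: "nat \<times> nat \<Rightarrow> (nat \<times> nat) list" where
  "stp (j, a) = map (\<lambda>i. (i, 0)) [1..<j] @ [(j, Suc a)]"

definition valid :: "nat \<Rightarrow> (nat \<times> nat) list \<Rightarrow> bool" where
  "valid m bs \<longleftrightarrow> (\<forall>p \<in> set bs. 1 \<le> fst p \<and> fst p \<le> m)"

lemma W_append[simp]: "W m (xs @ ys) = W m xs @ W m ys" by (simp add: W_def)
lemma W_Nil[simp]: "W m [] = []" by (simp add: W_def)
lemma W_Cons[simp]: "W m (x # ys) = blk m x @ W m ys" by (simp add: W_def)

lemma W_zero: "W m (map (\<lambda>i. (i, 0)) xs) = map (\<lambda>l. (B l, False)) xs"
  by (induct xs) auto

lemma Bpre_split: "1 \<le> j \<Longrightarrow> Bpre j = map (\<lambda>l. (B l, False)) [1..<j] @ [(B j, False)]"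
  by (simp add: Bpre_def)

lemma phi_blk: assumes "1 \<le> j" "j \<le> m"
  shows "fg_eq (phi_word m (blk m (j, a))) (Apre (Suc m) @ W m (stp (j, a)) @ inv_word (Apre (Suc m)))"
proof -
  have "phi_word m (blk m (j, a)) = (Apre (Suc m) @ Bpre j) @ inv_word (Apre j) @ phi_word m (R j (Suc m) a) @ []"
    by (simp add: phi_Cons phi_letter_def)
  also have "\<dots> = ((Apre (Suc m) @ Bpre j) @ inv_word (Apre j)) @ phi_word m (R j (Suc m) a) @ []" by simp
  also have "fg_eq \<dots> (((Apre (Suc m) @ Bpre j) @ inv_word (Apre j)) @ (Apre j @ R j (Suc m) (Suc a) @ inv_word (Apre (Suc m))) @ [])"
    by (rule fg_cong[OF phi_R]) (use assms in auto)
  also have "\<dots> = (Apre (Suc m) @ Bpre j) @ inv_word (Apre j) @ Apre j @ (R j (Suc m) (Suc a) @ inv_word (Apre (Suc m)))"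
    by simp
  also have "fg_eq \<dots> ((Apre (Suc m) @ Bpre j) @ (R j (Suc m) (Suc a) @ inv_word (Apre (Suc m))))"
    by (rule fg_cancel_left)
  also have "\<dots> = Apre (Suc m) @ W m (stp (j, a)) @ inv_word (Apre (Suc m))"
    using assms by (simp add: W_zero Bpre_split)
  finally show ?thesis .
qed

lemma phi_W: "valid m bs \<Longrightarrow>
  fg_eq (phi_word m (W m bs)) (Apre (Suc m) @ W m (concat (map stp bs)) @ inv_word (Apre (Suc m)))"
proof (induct bs)
  case Nil show ?case using fg_sym[OF fg_cancel_right[of "[]" "Apre (Suc m)" "[]"]] by simp
next
  case (Cons p bs)
  obtain j a where p: "p = (j, a)" by (cases p)
  have v: "valid m bs" "1 \<le> j" "j \<le> m" using Cons.prems by (auto simp: valid_def p)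
  have "phi_word m (W m (p # bs)) = phi_word m (blk m (j, a)) @ phi_word m (W m bs)" by (simp add: p phi_Cons)
  also have "fg_eq \<dots> ((Apre (Suc m) @ W m (stp (j, a)) @ inv_word (Apre (Suc m)))
      @ (Apre (Suc m) @ W m (concat (map stp bs)) @ inv_word (Apre (Suc m))))"
    by (rule fg_append[OF phi_blk Cons(1)]) (use v in auto)
  also have "\<dots> = (Apre (Suc m) @ W m (stp (j, a))) @ inv_word (Apre (Suc m)) @ Apre (Suc m) @ (W m (concat (map stp bs)) @ inv_word (Apre (Suc m)))"
    by simp
  also have "fg_eq \<dots> ((Apre (Suc m) @ W m (stp (j, a))) @ (W m (concat (map stp bs)) @ inv_word (Apre (Suc m))))"
    by (rule fg_cancel_left)
  finally show ?case by (simp add: p)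
qed

lemma valid_iff: "valid m bs \<longleftrightarrow> (\<forall>j a. (j, a) \<in> set bs \<longrightarrow> 1 \<le> j \<and> j \<le> m)"
  by (auto simp: valid_def)

lemma valid_append: "valid m (xs @ ys) \<longleftrightarrow> valid m xs \<and> valid m ys"
  by (auto simp: valid_def)

lemma validD: "valid m bs \<Longrightarrow> (j, a) \<in> set bs \<Longrightarrow> 1 \<le> j \<and> j \<le> m"
  by (metis fst_conv valid_def)

lemma valid_stp: assumes "valid m bs" shows "valid m (concat (map stp bs))"
proof -
  have d: "\<And>j a. (j, a) \<in> set bs \<Longrightarrow> 1 \<le> j \<and> j \<le> m" using validD[OF assms] by blast
  show ?thesis unfolding valid_iff by (fastforce dest: d)
qed

lemma valid_zero: "k \<le> m \<Longrightarrow> valid m (map (\<lambda>i. (i, 0)) [1..<k])"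
  by (auto simp: valid_def)

lemma main: assumes "1 \<le> k" "k \<le> m" "1 \<le> n"
  shows "\<exists>bs. valid m bs \<and> fg_eq ((phi_word m ^^ n) [(B k, False)])
           (R 1 (Suc m) n @ W m bs @ [(B k, False)] @ inv_word (R 1 k n))"
  using assms(3)
proof (induct n)
  case 0 thus ?case by simp
next
  case (Suc n)
  show ?case
  proof (cases "n = 0")
    case True
    show ?thesis
      apply (rule exI[of _ "map (\<lambda>i. (i, 0)) [1..<k]"])
      using assms True valid_zero[OF assms(2)] by (simp add: W_zero Bpre_split R_Apre)
  next
    case False
    then obtain bs where v: "valid m bs" and h: "fg_eq ((phi_word m ^^ n) [(B k, False)])
           (R 1 (Suc m) n @ W m bs @ [(B k, False)] @ inv_word (R 1 k n))" using Suc by auto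
    let ?D = "Apre (Suc m)"
    let ?bs = "concat (map stp bs) @ map (\<lambda>i. (i, 0)) [1..<k]"
    have "(phi_word m ^^ Suc n) [(B k, False)] = phi_word m ((phi_word m ^^ n) [(B k, False)])" by simp
    also have "fg_eq \<dots> (phi_word m (R 1 (Suc m) n @ W m bs @ [(B k, False)] @ inv_word (R 1 k n)))"
      by (rule fg_phi[OF h])
    also have "\<dots> = phi_word m (R 1 (Suc m) n) @ phi_word m (W m bs) @ (?D @ Bpre k @ inv_word (Apre k))
                     @ inv_word (phi_word m (R 1 k n))"
      by (simp add: phi_inv phi_Cons phi_letter_def)
    also have "fg_eq \<dots> ((R 1 (Suc m) (Suc n) @ inv_word ?D) @ (?D @ W m (concat (map stp bs)) @ inv_word ?D)
       @ (?D @ Bpre k @ inv_word (Apre k)) @ inv_word (R 1 k (Suc n) @ inv_word (Apre k)))"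
      by (intro fg_append phi_R1 phi_W v fg_refl fg_inv)
    also have "\<dots> = R 1 (Suc m) (Suc n) @ inv_word ?D @ ?D @ (W m (concat (map stp bs)) @ inv_word ?D
       @ ?D @ Bpre k @ inv_word (Apre k) @ Apre k @ inv_word (R 1 k (Suc n)))"
      by simp
    also have "fg_eq \<dots> (R 1 (Suc m) (Suc n) @ (W m (concat (map stp bs)) @ inv_word ?D
       @ ?D @ Bpre k @ inv_word (Apre k) @ Apre k @ inv_word (R 1 k (Suc n))))"
      by (rule fg_cancel_left)
    also have "\<dots> = (R 1 (Suc m) (Suc n) @ W m (concat (map stp bs))) @ inv_word ?D
       @ ?D @ (Bpre k @ inv_word (Apre k) @ Apre k @ inv_word (R 1 k (Suc n)))"
      by simp
    also have "fg_eq \<dots> ((R 1 (Suc m) (Suc n) @ W m (concat (map stp bs))) @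
       (Bpre k @ inv_word (Apre k) @ Apre k @ inv_word (R 1 k (Suc n))))"
      by (rule fg_cancel_left)
    also have "\<dots> = (R 1 (Suc m) (Suc n) @ W m (concat (map stp bs)) @ Bpre k) @ inv_word (Apre k) @ Apre k @ inv_word (R 1 k (Suc n))"
      by simp
    also have "fg_eq \<dots> ((R 1 (Suc m) (Suc n) @ W m (concat (map stp bs)) @ Bpre k) @ inv_word (R 1 k (Suc n)))"
      by (rule fg_cancel_left)
    also have "\<dots> = R 1 (Suc m) (Suc n) @ W m ?bs @ [(B k, False)] @ inv_word (R 1 k (Suc n))"
      using assms by (simp add: W_zero Bpre_split)
    finally have fg: "fg_eq ((phi_word m ^^ Suc n) [(B k, False)]) (R 1 (Suc m) (Suc n) @ W m ?bs @ [(B k, False)] @ inv_word (R 1 k (Suc n)))" .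
    have "valid m ?bs" using valid_stp[OF v] valid_zero[OF assms(2)] by (simp only: valid_append)
    thus ?thesis using fg by blast
  qed
qed

lemma set_R: "x \<in> set (R i j a) \<Longrightarrow> \<exists>l. i \<le> l \<and> l < j \<and> x = (A l, False)"
  by (auto simp: R_def)

lemma positive_W: assumes "valid m bs" shows "positive_word m (W m bs)"
proof -
  have d: "\<And>j a. (j, a) \<in> set bs \<Longrightarrow> 1 \<le> j \<and> j \<le> m" using validD[OF assms] by blast
  show ?thesis unfolding positive_word_def W_def
  proof
    fix x assume "x \<in> set (concat (map (blk m) bs))"
    then obtain p where p: "p \<in> set bs" "x \<in> set (blk m p)" by auto
    obtain j a where pj: "p = (j, a)" by (cases p)
    have j: "1 \<le> j" "j \<le> m" using d p(1) pj by auto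
    from p(2) pj have "x = (B j, False) \<or> x \<in> set (R j (Suc m) a)" by simp
    then show "\<not> snd x \<and> (\<exists>i\<in>{1..m}. fst x = A i \<or> fst x = B i)"
    proof
      assume "x = (B j, False)" thus ?thesis using j by auto
    next
      assume "x \<in> set (R j (Suc m) a)"
      then obtain l where "j \<le> l" "l < Suc m" "x = (A l, False)" using set_R by blast
      thus ?thesis using j by auto
    qed
  qed
qed

lemma inv_concat: "inv_word (concat (map f xs)) = concat (map (inv_word \<circ> f) (rev xs))"
  by (induct xs) auto

lemma inv_R: "inv_word (R i j a) = concat (map (\<lambda>l. replicate a (A l, True)) (rev [i..<j]))"
  unfolding R_def inv_concat by (simp add: inv_word_def o_def)

theorem lemma7p7:
  fixes m n k :: nat
  assumes "1 \<le> m" and "1 \<le> n" and "1 \<le> k" and "k \<le> m"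
  shows "\<exists>u. positive_word m u \<and>
     fg_eq ((phi_word m ^^ n) [(B k, False)])
       (concat (map (\<lambda>l. replicate n (A l, False)) [1..<Suc m]) @ u @ [(B k, False)]
        @ concat (map (\<lambda>l. replicate n (A l, True)) (rev [1..<k])))"
proof -
  obtain bs where "valid m bs" and h: "fg_eq ((phi_word m ^^ n) [(B k, False)])
           (R 1 (Suc m) n @ W m bs @ [(B k, False)] @ inv_word (R 1 k n))"
    using main assms by blast
  have eq: "R 1 (Suc m) n = concat (map (\<lambda>l. replicate n (A l, False)) [1..<Suc m])"
    by (simp only: R_def)
  from h have "fg_eq ((phi_word m ^^ n) [(B k, False)])
       (concat (map (\<lambda>l. replicate n (A l, False)) [1..<Suc m]) @ W m bs @ [(B k, False)]
        @ concat (map (\<lambda>l. replicate n (A l, True)) (rev [1..<k])))"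
    by (simp only: eq inv_R)
  thus ?thesis using positive_W[OF \<open>valid m bs\<close>] by blast
qed

end
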